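(* Let $A$ be a $p\times p$ positive-semidefinite matrix. If $K_1(A)/K_2(A)\to0$ as $m\to\infty$, then $K_1(A)/\{\Delta(A)\}^2\to0$ as $m\to\infty$.
   Context: Two populations on $\mathbb{R}^p$ have mean vectors $\mu_1,\mu_2$ and positive-definite covariance matrices $\Sigma_1,\Sigma_2$; sample sizes $n_1,n_2\ge4$. Let $\mu_A=A^{1/2}(\mu_1-\mu_2)$, $\Sigma_{i,A}=A^{1/2}\Sigma_iA^{1/2}$, $\Delta(A)=\|\mu_A\|^2$, $K_1(A)=2\sum_{i=1}^2\mathrm{tr}(\Sigma_{i,A}^2)/\{n_i(n_i-1)\}+4\mathrm{tr}(\Sigma_{1,A}\Sigma_{2,A})/(n_1n_2)$, $K_2(A)=4\sum_{i=1}^2\mu_A^T\Sigma_{i,A}\mu_A/n_i$. All quantities may depend on $p,n_1,n_2$; $m=\min\{p,\min(n_1,n_2)\}$. *)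

theory Defs
  imports Complex_Main "Jordan_Normal_Form.Matrix"
begin

definition mtrace :: "real mat \<Rightarrow> real" where
  "mtrace M = (\<Sum>i<dim_row M. M $$ (i, i))"

definition psd_mat :: "nat \<Rightarrow> real mat \<Rightarrow> bool" where
  "psd_mat n M \<longleftrightarrow> M \<in> carrier_mat n n \<and> transpose_mat M = M \<and>
     (\<forall>x \<in> carrier_vec n. 0 \<le> x \<bullet> (M *\<^sub>v x))"

definition pd_mat :: "nat \<Rightarrow> real mat \<Rightarrow> bool" where
  "pd_mat n M \<longleftrightarrow> M \<in> carrier_mat n n \<and> transpose_mat M = M \<and>
     (\<forall>x \<in> carrier_vec n. x \<noteq> 0\<^sub>v n \<longrightarrow> 0 < x \<bullet> (M *\<^sub>v x))"

(* R plays the role of A^{1/2}, the positive-semidefinite square root of A *)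
definition muA :: "real mat \<Rightarrow> real vec \<Rightarrow> real vec \<Rightarrow> real vec" where
  "muA R mu1 mu2 = R *\<^sub>v (mu1 - mu2)"

definition SigA :: "real mat \<Rightarrow> real mat \<Rightarrow> real mat" where
  "SigA R S = R * S * R"

definition Delta :: "real mat \<Rightarrow> real vec \<Rightarrow> real vec \<Rightarrow> real" where
  "Delta R mu1 mu2 = muA R mu1 mu2 \<bullet> muA R mu1 mu2"

definition K1 :: "real mat \<Rightarrow> real mat \<Rightarrow> real mat \<Rightarrow> nat \<Rightarrow> nat \<Rightarrow> real" where
  "K1 R S1 S2 n1 n2 =
     2 * (mtrace (SigA R S1 * SigA R S1) / (real n1 * (real n1 - 1))
        + mtrace (SigA R S2 * SigA R S2) / (real n2 * (real n2 - 1)))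
     + 4 * mtrace (SigA R S1 * SigA R S2) / (real n1 * real n2)"

definition K2 :: "real mat \<Rightarrow> real mat \<Rightarrow> real mat \<Rightarrow> real vec \<Rightarrow> real vec \<Rightarrow> nat \<Rightarrow> nat \<Rightarrow> real" where
  "K2 R S1 S2 mu1 mu2 n1 n2 =
     4 * ((muA R mu1 mu2 \<bullet> (SigA R S1 *\<^sub>v muA R mu1 mu2)) / real n1
        + (muA R mu1 mu2 \<bullet> (SigA R S2 *\<^sub>v muA R mu1 mu2)) / real n2)"

end

theory Submission
  imports Defs "HOL-Analysis.Convex"
begin

lemma core:
  fixes P Q :: "nat \<Rightarrow> nat \<Rightarrow> real" and x :: "nat \<Rightarrow> real"
  assumes a: "0 \<le> a" and b: "0 \<le> b" and c: "a\<^sup>2 \<le> c" and d: "b\<^sup>2 \<le> d"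
  shows "(a * (\<Sum>i<n. x i * (\<Sum>j<n. P i j * x j)) + b * (\<Sum>i<n. x i * (\<Sum>j<n. Q i j * x j)))\<^sup>2
     \<le> (c * (\<Sum>i<n. \<Sum>j<n. P i j * P i j) + d * (\<Sum>i<n. \<Sum>j<n. Q i j * Q i j)
         + 2*a*b*(\<Sum>i<n. \<Sum>j<n. P i j * Q i j)) * (\<Sum>i<n. (x i)\<^sup>2)\<^sup>2"
    and "(\<Sum>i<n. \<Sum>j<n. (a * P i j + b * Q i j)\<^sup>2) \<le> c * (\<Sum>i<n. \<Sum>j<n. P i j * P i j) + d * (\<Sum>i<n. \<Sum>j<n. Q i j * Q i j)
         + 2*a*b*(\<Sum>i<n. \<Sum>j<n. P i j * Q i j)"
proof -
  define M where "M i j = a * P i j + b * Q i j" for i j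
  define X where "X = (\<Sum>i<n. (x i)\<^sup>2)"
  define FP where "FP = (\<Sum>i<n. \<Sum>j<n. P i j * P i j)"
  define FQ where "FQ = (\<Sum>i<n. \<Sum>j<n. Q i j * Q i j)"
  define FPQ where "FPQ = (\<Sum>i<n. \<Sum>j<n. P i j * Q i j)"
  have X0: "0 \<le> X" unfolding X_def by (intro sum_nonneg) auto
  have e1: "a * (\<Sum>i<n. x i * (\<Sum>j<n. P i j * x j)) + b * (\<Sum>i<n. x i * (\<Sum>j<n. Q i j * x j))
      = (\<Sum>i<n. x i * (\<Sum>j<n. M i j * x j))"
    by (simp add: M_def sum_distrib_left sum.distrib algebra_simps)
  have cs1: "(\<Sum>i<n. x i * (\<Sum>j<n. M i j * x j))\<^sup>2 \<le> X * (\<Sum>i<n. (\<Sum>j<n. M i j * x j)\<^sup>2)"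
    unfolding X_def by (rule Cauchy_Schwarz_ineq_sum)
  have cs2: "(\<Sum>j<n. M i j * x j)\<^sup>2 \<le> (\<Sum>j<n. (M i j)\<^sup>2) * X" for i
    unfolding X_def by (rule Cauchy_Schwarz_ineq_sum)
  have "(\<Sum>i<n. (\<Sum>j<n. M i j * x j)\<^sup>2) \<le> (\<Sum>i<n. (\<Sum>j<n. (M i j)\<^sup>2) * X)"
    by (intro sum_mono cs2)
  also have "\<dots> = (\<Sum>i<n. \<Sum>j<n. (M i j)\<^sup>2) * X" by (simp add: sum_distrib_right)
  finally have s2: "(\<Sum>i<n. (\<Sum>j<n. M i j * x j)\<^sup>2) \<le> (\<Sum>i<n. \<Sum>j<n. (M i j)\<^sup>2) * X" .
  have eM: "(\<Sum>i<n. \<Sum>j<n. (M i j)\<^sup>2) = a\<^sup>2 * FP + b\<^sup>2 * FQ + 2*a*b*FPQ"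
    by (simp add: M_def FP_def FQ_def FPQ_def power2_eq_square sum_distrib_left sum.distrib algebra_simps)
  have FP0: "0 \<le> FP" unfolding FP_def by (intro sum_nonneg) auto
  have FQ0: "0 \<le> FQ" unfolding FQ_def by (intro sum_nonneg) auto
  have le: "a\<^sup>2 * FP + b\<^sup>2 * FQ + 2*a*b*FPQ \<le> c * FP + d * FQ + 2*a*b*FPQ"
    using mult_right_mono[OF c FP0] mult_right_mono[OF d FQ0] by linarith
  show "(\<Sum>i<n. \<Sum>j<n. (a * P i j + b * Q i j)\<^sup>2) \<le> c * FP + d * FQ + 2*a*b*FPQ"
    using eM le unfolding M_def by simp
  have "(\<Sum>i<n. x i * (\<Sum>j<n. M i j * x j))\<^sup>2 \<le> X * ((\<Sum>i<n. \<Sum>j<n. (M i j)\<^sup>2) * X)"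
    using cs1 mult_left_mono[OF s2 X0] by linarith
  also have "\<dots> \<le> X * ((c * FP + d * FQ + 2*a*b*FPQ) * X)"
    using eM le X0 by (intro mult_left_mono mult_right_mono) auto
  finally show "(a * (\<Sum>i<n. x i * (\<Sum>j<n. P i j * x j)) + b * (\<Sum>i<n. x i * (\<Sum>j<n. Q i j * x j)))\<^sup>2
     \<le> (c * FP + d * FQ + 2*a*b*FPQ) * X\<^sup>2"
    unfolding e1 by (simp add: power2_eq_square algebra_simps)
qed
lemma qf_sum:
  fixes P :: "real mat"
  assumes "P \<in> carrier_mat n n" "x \<in> carrier_vec n"
  shows "x \<bullet> (P *\<^sub>v x) = (\<Sum>i<n. x$i * (\<Sum>j<n. P$$(i,j) * x$j))"
  using assms by (simp add: scalar_prod_def atLeast0LessThan)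

lemma tr_sum:
  fixes P Q :: "real mat"
  assumes P: "P \<in> carrier_mat n n" and Q: "Q \<in> carrier_mat n n" and sQ: "transpose_mat Q = Q"
  shows "mtrace (P * Q) = (\<Sum>i<n. \<Sum>j<n. P$$(i,j) * Q$$(i,j))"
proof -
  have "Q$$(j,i) = Q$$(i,j)" if "i<n" "j<n" for i j
  proof -
    have "transpose_mat Q $$ (i,j) = Q $$ (j,i)" using that Q by simp
    thus ?thesis using sQ by simp
  qed
  thus ?thesis using P Q unfolding mtrace_def
    by (auto simp: scalar_prod_def atLeast0LessThan intro!: sum.cong)
qed

lemma self_sum:
  fixes x :: "real vec"
  assumes "x \<in> carrier_vec n"
  shows "x \<bullet> x = (\<Sum>i<n. (x$i)\<^sup>2)"
  using assms by (simp add: scalar_prod_def atLeast0LessThan power2_eq_square)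

lemma sym_RSR:
  fixes R S :: "real mat"
  assumes R: "R \<in> carrier_mat n n" "transpose_mat R = R"
    and S: "S \<in> carrier_mat n n" "transpose_mat S = S"
  shows "transpose_mat (R * S * R) = R * S * R" "R * S * R \<in> carrier_mat n n"
proof -
  have "transpose_mat (R * S * R) = transpose_mat R * transpose_mat (R * S)"
    using R S by (intro transpose_mult[of _ n n]) auto
  also have "transpose_mat (R * S) = transpose_mat S * transpose_mat R"
    using R S by (intro transpose_mult[of _ n n]) auto
  finally show "transpose_mat (R * S * R) = R * S * R" using R S by simp
  show "R * S * R \<in> carrier_mat n n" using R S by auto
qed

lemma pos_term:
  fixes R S :: "real mat" and mu x :: "real vec"
  assumes R: "R \<in> carrier_mat n n" "transpose_mat R = R"
    and S: "S \<in> carrier_mat n n" "\<forall>y \<in> carrier_vec n. y \<noteq> 0\<^sub>v n \<longrightarrow> 0 < y \<bullet> (S *\<^sub>v y)"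
    and mu: "mu \<in> carrier_vec n" and x: "x = R *\<^sub>v mu" and pos: "0 < x \<bullet> x"
  shows "0 < x \<bullet> ((R * S * R) *\<^sub>v x)"
proof -
  have xc: "x \<in> carrier_vec n" using x R mu by simp
  have sw: "(R *\<^sub>v y) \<bullet> z = y \<bullet> (R *\<^sub>v z)" if "y \<in> carrier_vec n" "z \<in> carrier_vec n" for y z
    using transpose_vec_mult_scalar[OF R(1) that(2) that(1)] R(2) by simp
  have "(R * S * R) *\<^sub>v x = (R * S) *\<^sub>v (R *\<^sub>v x)" using R S xc by (intro assoc_mult_mat_vec[of _ n n]) auto
  also have "\<dots> = R *\<^sub>v (S *\<^sub>v (R *\<^sub>v x))" using R S xc by (intro assoc_mult_mat_vec[of _ n n]) auto
  finally have "(R * S * R) *\<^sub>v x = R *\<^sub>v (S *\<^sub>v (R *\<^sub>v x))" .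
  hence e: "x \<bullet> ((R * S * R) *\<^sub>v x) = (R *\<^sub>v x) \<bullet> (S *\<^sub>v (R *\<^sub>v x))"
    using sw[of x "S *\<^sub>v (R *\<^sub>v x)"] xc R S by simp
  have "R *\<^sub>v x \<noteq> 0\<^sub>v n"
  proof
    assume h: "R *\<^sub>v x = 0\<^sub>v n"
    have "x \<bullet> x = mu \<bullet> (R *\<^sub>v x)" using sw[OF mu xc] x by simp
    also have "\<dots> = 0" using h mu by simp
    finally show False using pos by simp
  qed
  thus ?thesis using e S R xc by simp
qed

lemma perk:
  fixes mu1 mu2 :: "real vec" and S1 S2 R :: "real mat" and n n1 n2 :: nat
  assumes mu1: "mu1 \<in> carrier_vec n" and mu2: "mu2 \<in> carrier_vec n"
    and S1: "pd_mat n S1" and S2: "pd_mat n S2"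
    and n1: "n1 \<ge> 4" and n2: "n2 \<ge> 4" and R: "psd_mat n R"
  shows "0 \<le> K1 R S1 S2 n1 n2 / (Delta R mu1 mu2)\<^sup>2 \<and>
     K1 R S1 S2 n1 n2 / (Delta R mu1 mu2)\<^sup>2 \<le> 8 * (K1 R S1 S2 n1 n2 / K2 R S1 S2 mu1 mu2 n1 n2)\<^sup>2"
proof -
  have Rc: "R \<in> carrier_mat n n" and Rs: "transpose_mat R = R" using R unfolding psd_mat_def by auto
  have S1c: "S1 \<in> carrier_mat n n" and S1s: "transpose_mat S1 = S1"
    and S1p: "\<forall>y \<in> carrier_vec n. y \<noteq> 0\<^sub>v n \<longrightarrow> 0 < y \<bullet> (S1 *\<^sub>v y)" using S1 unfolding pd_mat_def by auto
  have S2c: "S2 \<in> carrier_mat n n" and S2s: "transpose_mat S2 = S2"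
    and S2p: "\<forall>y \<in> carrier_vec n. y \<noteq> 0\<^sub>v n \<longrightarrow> 0 < y \<bullet> (S2 *\<^sub>v y)" using S2 unfolding pd_mat_def by auto
  define mu where "mu = mu1 - mu2"
  have muc: "mu \<in> carrier_vec n" using mu1 mu2 unfolding mu_def by simp
  define x where "x = R *\<^sub>v mu"
  have xc: "x \<in> carrier_vec n" using Rc muc unfolding x_def by simp
  define P where "P = R * S1 * R"
  define Q where "Q = R * S2 * R"
  have Pc: "P \<in> carrier_mat n n" and Ps: "transpose_mat P = P"
    using sym_RSR[OF Rc Rs S1c S1s] unfolding P_def by auto
  have Qc: "Q \<in> carrier_mat n n" and Qs: "transpose_mat Q = Q"
    using sym_RSR[OF Rc Rs S2c S2s] unfolding Q_def by auto
  define a where "a = 1 / real n1"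
  define b where "b = 1 / real n2"
  define c where "c = 1 / (real n1 * (real n1 - 1))"
  define d where "d = 1 / (real n2 * (real n2 - 1))"
  have a0: "0 < a" and b0: "0 < b" using n1 n2 unfolding a_def b_def by auto
  have ac: "a\<^sup>2 \<le> c" unfolding a_def c_def using n1
    by (simp add: power2_eq_square divide_simps)
  have bd: "b\<^sup>2 \<le> d" unfolding b_def d_def using n2
    by (simp add: power2_eq_square divide_simps)
  define FP where "FP = (\<Sum>i<n. \<Sum>j<n. P$$(i,j) * P$$(i,j))"
  define FQ where "FQ = (\<Sum>i<n. \<Sum>j<n. Q$$(i,j) * Q$$(i,j))"
  define FPQ where "FPQ = (\<Sum>i<n. \<Sum>j<n. P$$(i,j) * Q$$(i,j))"
  define qP where "qP = (\<Sum>i<n. x$i * (\<Sum>j<n. P$$(i,j) * x$j))"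
  define qQ where "qQ = (\<Sum>i<n. x$i * (\<Sum>j<n. Q$$(i,j) * x$j))"
  define X where "X = (\<Sum>i<n. (x$i)\<^sup>2)"
  define T where "T = c * FP + d * FQ + 2*a*b*FPQ"
  have core1: "(a * qP + b * qQ)\<^sup>2 \<le> T * X\<^sup>2"
    using core(1)[OF less_imp_le[OF a0] less_imp_le[OF b0] ac bd, where x="\<lambda>i. x$i" and n=n and P="\<lambda>i j. P$$(i,j)" and Q="\<lambda>i j. Q$$(i,j)"]
    unfolding qP_def qQ_def T_def FP_def FQ_def FPQ_def X_def by simp
  have "(\<Sum>i<n. \<Sum>j<n. (a * P$$(i,j) + b * Q$$(i,j))\<^sup>2) \<le> T"
    using core(2)[OF less_imp_le[OF a0] less_imp_le[OF b0] ac bd, where n=n and P="\<lambda>i j. P$$(i,j)" and Q="\<lambda>i j. Q$$(i,j)"]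
    unfolding T_def FP_def FQ_def FPQ_def by simp
  moreover have "0 \<le> (\<Sum>i<n. \<Sum>j<n. (a * P$$(i,j) + b * Q$$(i,j))\<^sup>2)" by (intro sum_nonneg) auto
  ultimately have T0: "0 \<le> T" by linarith
  have K1e: "K1 R S1 S2 n1 n2 = 2 * T"
  proof -
    have "K1 R S1 S2 n1 n2 = 2 * (FP / (real n1 * (real n1 - 1)) + FQ / (real n2 * (real n2 - 1)))
      + 4 * FPQ / (real n1 * real n2)"
      unfolding K1_def SigA_def P_def[symmetric] Q_def[symmetric] FP_def FQ_def FPQ_def
      using tr_sum[OF Pc Pc Ps] tr_sum[OF Qc Qc Qs] tr_sum[OF Pc Qc Qs] by simp
    thus ?thesis unfolding T_def a_def b_def c_def d_def by simp
  qed
  have K2e: "K2 R S1 S2 mu1 mu2 n1 n2 = 4 * (a * qP + b * qQ)"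
    unfolding K2_def SigA_def muA_def mu_def[symmetric] x_def[symmetric] P_def[symmetric] Q_def[symmetric]
      qP_def qQ_def a_def b_def
    using qf_sum[OF Pc xc] qf_sum[OF Qc xc] by simp
  have De: "Delta R mu1 mu2 = X"
    unfolding Delta_def muA_def mu_def[symmetric] x_def[symmetric] X_def using self_sum[OF xc] .
  have X0: "0 \<le> X" unfolding X_def by (intro sum_nonneg) auto
  show ?thesis
  proof (cases "X = 0")
    case True
    thus ?thesis unfolding De by simp
  next
    case False
    hence Xp: "0 < X" using X0 by simp
    have xx: "0 < x \<bullet> x" using Xp self_sum[OF xc] unfolding X_def by simp
    have "0 < x \<bullet> (P *\<^sub>v x)" unfolding P_def
      using pos_term[OF Rc Rs S1c S1p muc x_def xx] .
    hence qP0: "0 < qP" unfolding qP_def using qf_sum[OF Pc xc] by simp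
    have "0 < x \<bullet> (Q *\<^sub>v x)" unfolding Q_def
      using pos_term[OF Rc Rs S2c S2p muc x_def xx] .
    hence qQ0: "0 < qQ" unfolding qQ_def using qf_sum[OF Qc xc] by simp
    have u: "0 < a * qP + b * qQ" using a0 b0 qP0 qQ0 by (simp add: add_pos_pos)
    have main: "2 * T * (4 * (a * qP + b * qQ))\<^sup>2 \<le> 8 * (2 * T)\<^sup>2 * X\<^sup>2"
    proof -
      have "2 * T * (4 * (a * qP + b * qQ))\<^sup>2 = 32 * T * (a * qP + b * qQ)\<^sup>2"
        by (simp add: power2_eq_square algebra_simps)
      also have "\<dots> \<le> 32 * T * (T * X\<^sup>2)" using core1 T0 by (intro mult_left_mono) auto
      also have "\<dots> = 8 * (2 * T)\<^sup>2 * X\<^sup>2" by (simp add: power2_eq_square)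
      finally show ?thesis .
    qed
    have "2 * T / X\<^sup>2 \<le> 8 * (2 * T / (4 * (a * qP + b * qQ)))\<^sup>2"
      using main Xp u by (simp add: divide_simps power_divide)
    thus ?thesis unfolding K1e K2e De using T0 X0 by simp
  qed
qed

theorem proposition1:
  fixes p n1 n2 :: "nat \<Rightarrow> nat"
    and mu1 mu2 :: "nat \<Rightarrow> real vec"
    and S1 S2 A R :: "nat \<Rightarrow> real mat"
  assumes mu1: "\<And>k. mu1 k \<in> carrier_vec (p k)"
    and mu2: "\<And>k. mu2 k \<in> carrier_vec (p k)"
    and S1: "\<And>k. pd_mat (p k) (S1 k)"
    and S2: "\<And>k. pd_mat (p k) (S2 k)"
    and n1: "\<And>k. n1 k \<ge> 4"
    and n2: "\<And>k. n2 k \<ge> 4"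
    and A: "\<And>k. psd_mat (p k) (A k)"
    and R: "\<And>k. psd_mat (p k) (R k) \<and> R k * R k = A k"
    and m: "filterlim (\<lambda>k. min (p k) (min (n1 k) (n2 k))) at_top sequentially"
    and hyp: "(\<lambda>k. K1 (R k) (S1 k) (S2 k) (n1 k) (n2 k)
                   / K2 (R k) (S1 k) (S2 k) (mu1 k) (mu2 k) (n1 k) (n2 k)) \<longlonglongrightarrow> 0"
  shows "(\<lambda>k. K1 (R k) (S1 k) (S2 k) (n1 k) (n2 k)
                / (Delta (R k) (mu1 k) (mu2 k))\<^sup>2) \<longlonglongrightarrow> 0"
proof (rule tendsto_sandwich[where f="\<lambda>_. 0" and h="\<lambda>k. 8 * (K1 (R k) (S1 k) (S2 k) (n1 k) (n2 k)
                   / K2 (R k) (S1 k) (S2 k) (mu1 k) (mu2 k) (n1 k) (n2 k))\<^sup>2"])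
  have pk: "\<And>k. 0 \<le> K1 (R k) (S1 k) (S2 k) (n1 k) (n2 k) / (Delta (R k) (mu1 k) (mu2 k))\<^sup>2 \<and>
     K1 (R k) (S1 k) (S2 k) (n1 k) (n2 k) / (Delta (R k) (mu1 k) (mu2 k))\<^sup>2 \<le> 8 * (K1 (R k) (S1 k) (S2 k) (n1 k) (n2 k)
                   / K2 (R k) (S1 k) (S2 k) (mu1 k) (mu2 k) (n1 k) (n2 k))\<^sup>2"
    using perk[OF mu1 mu2 S1 S2 n1 n2] R by blast
  show "\<forall>\<^sub>F k in sequentially. 0 \<le> K1 (R k) (S1 k) (S2 k) (n1 k) (n2 k) / (Delta (R k) (mu1 k) (mu2 k))\<^sup>2"
    using pk by simp
  show "\<forall>\<^sub>F k in sequentially. K1 (R k) (S1 k) (S2 k) (n1 k) (n2 k) / (Delta (R k) (mu1 k) (mu2 k))\<^sup>2 \<le> 8 * (K1 (R k) (S1 k) (S2 k) (n1 k) (n2 k)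
                   / K2 (R k) (S1 k) (S2 k) (mu1 k) (mu2 k) (n1 k) (n2 k))\<^sup>2"
    using pk by simp
  show "(\<lambda>_. 0::real) \<longlonglongrightarrow> 0" by simp
  show "(\<lambda>k. 8 * (K1 (R k) (S1 k) (S2 k) (n1 k) (n2 k)
                   / K2 (R k) (S1 k) (S2 k) (mu1 k) (mu2 k) (n1 k) (n2 k))\<^sup>2) \<longlonglongrightarrow> 0"
  proof -
    have "(\<lambda>k. (K1 (R k) (S1 k) (S2 k) (n1 k) (n2 k)
                   / K2 (R k) (S1 k) (S2 k) (mu1 k) (mu2 k) (n1 k) (n2 k))\<^sup>2) \<longlonglongrightarrow> 0"
      using tendsto_power[OF hyp, of 2] by simp
    thus ?thesis using tendsto_mult_right_zero by blast
  qed
qed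

end
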